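(* Let $(X,\mathcal{R})$ be a partially metric association scheme with respect to $R_1$, whose scheme graph $\Gamma$ is connected with valency $k=3$ and $a_1=p^1_{11}=0$. Let $E$ be a minimal scheme idempotent with multiplicity three and let $\theta$ be the corresponding eigenvalue of $\Gamma$ on $E$. Let $u_1,u_2$ be adjacent vertices of $\Gamma$, let $v_1,v_2$ be the other two neighbors of $u_1$, and let $v_3,v_4$ be the other two neighbors of $u_2$. Fix any vertex $x$ and put $\psi_i=\omega_{xu_i}$ ($i=1,2$) and $\phi_i=\omega_{xv_i}$ ($i=1,2,3,4$). Then $$\{\phi_3,\phi_4\}=\left\{\tfrac12\big(\theta\psi_2-\psi_1+(\phi_1-\phi_2)\big),\ \tfrac12\big(\theta\psi_2-\psi_1-(\phi_1-\phi_2)\big)\right\}.$$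
   Context: A (symmetric) association scheme with rank $d+1$ on a finite set $X$ ($|X|=n$) is a partition $\mathcal{R}=\{R_0,\dots,R_d\}$ of $X\times X$ with $R_0$ the diagonal, each $R_i$ symmetric, and numbers $p^h_{ij}$ such that for every $(x,y)\in R_h$ the number of $z$ with $(x,z)\in R_i$, $(z,y)\in R_j$ equals $p^h_{ij}$. The scheme graph of $R_1$ is the graph on $X$ with $x\sim y$ iff $(x,y)\in R_1$, with adjacency matrix $A_1$. The Bose–Mesner algebra has a basis of minimal scheme idempotents $E_0=\frac1nJ,\dots,E_d$; the multiplicity of $E_j$ is its rank, and if $A_1E_j=\theta E_j$ then $\theta$ is the corresponding eigenvalue on $E_j$. The scheme is partially metric with respect to the connected relation $R_1$ if the distance-$2$ relation of its scheme graph is a relation of the scheme. The cosine for $E$ of a pair $(x,y)$ is $\omega_{xy}=E_{xy}/E_{xx}$ (this depends only on the relation containing $(x,y)$). *)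

theory Defs
  imports "HOL-Analysis.Analysis"
begin

text \<open>The vertex set X is the (finite) type 'n.  The partition R_0,...,R_d of X x X is
  encoded by a function R :: 'n => 'n => nat with (x,y) in R_i iff R x y = i.\<close>

definition sym_assoc_scheme :: "('n::finite \<Rightarrow> 'n \<Rightarrow> nat) \<Rightarrow> nat \<Rightarrow> bool" where
  "sym_assoc_scheme R d \<longleftrightarrow>
     (\<forall>x y. R x y \<le> d) \<and>
     (\<forall>i\<le>d. \<exists>x y. R x y = i) \<and>
     (\<forall>x y. R x y = 0 \<longleftrightarrow> x = y) \<and>
     (\<forall>x y. R x y = R y x) \<and>
     (\<forall>h\<le>d. \<forall>i\<le>d. \<forall>j\<le>d. \<exists>p::nat. \<forall>x y. R x y = h \<longrightarrow>
         card {z. R x z = i \<and> R z y = j} = p)"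

definition rel_matrix :: "('n::finite \<Rightarrow> 'n \<Rightarrow> nat) \<Rightarrow> nat \<Rightarrow> real^'n^'n" where
  "rel_matrix R i = (\<chi> x y. if R x y = i then 1 else 0)"

definition adj :: "('n \<Rightarrow> 'n \<Rightarrow> nat) \<Rightarrow> 'n \<Rightarrow> 'n \<Rightarrow> bool" where
  "adj R x y \<longleftrightarrow> R x y = 1"

definition scheme_graph_connected :: "('n \<Rightarrow> 'n \<Rightarrow> nat) \<Rightarrow> bool" where
  "scheme_graph_connected R \<longleftrightarrow> (\<forall>x y. (x, y) \<in> {(a, b). adj R a b}\<^sup>*)"

definition dist2 :: "('n \<Rightarrow> 'n \<Rightarrow> nat) \<Rightarrow> 'n \<Rightarrow> 'n \<Rightarrow> bool" where
  "dist2 R x y \<longleftrightarrow> x \<noteq> y \<and> \<not> adj R x y \<and> (\<exists>z. adj R x z \<and> adj R z y)"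

definition partially_metric :: "('n \<Rightarrow> 'n \<Rightarrow> nat) \<Rightarrow> nat \<Rightarrow> bool" where
  "partially_metric R d \<longleftrightarrow> (\<exists>h\<le>d. \<forall>x y. R x y = h \<longleftrightarrow> dist2 R x y)"

text \<open>Bose--Mesner algebra: span of the relation matrices A_0,...,A_d.\<close>
definition bose_mesner :: "('n::finite \<Rightarrow> 'n \<Rightarrow> nat) \<Rightarrow> (real^'n^'n) set" where
  "bose_mesner R = {M. \<exists>c::nat \<Rightarrow> real. \<forall>x y. M $ x $ y = c (R x y)}"

definition minimal_idempotent :: "('n::finite \<Rightarrow> 'n \<Rightarrow> nat) \<Rightarrow> real^'n^'n \<Rightarrow> bool" where
  "minimal_idempotent R E \<longleftrightarrow>
     E \<in> bose_mesner R \<and> E ** E = E \<and> E \<noteq> 0 \<and>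
     (\<forall>F \<in> bose_mesner R. F ** F = F \<longrightarrow> E ** F = F \<longrightarrow> F = 0 \<or> F = E)"

definition cosine :: "real^'n^'n \<Rightarrow> 'n \<Rightarrow> 'n \<Rightarrow> real" where
  "cosine E x y = E $ x $ y / E $ x $ x"

end

theory Submission
  imports Defs
begin

lemma key_orth:
  fixes p q a b :: "'a::euclidean_space"
  assumes dS: "dim S = 3" and inS: "p \<in> span S" "q \<in> span S" "a \<in> span S" "b \<in> span S"
    and o: "a \<bullet> p = 0" "a \<bullet> q = 0" "b \<bullet> p = 0" "b \<bullet> q = 0"
    and nab: "a \<bullet> a = b \<bullet> b"
    and p0: "p \<noteq> 0" and q0: "q - ((p \<bullet> q) / (p \<bullet> p)) *\<^sub>R p \<noteq> 0"
  shows "b = a \<or> b = - a"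
proof (cases "a = 0")
  case True
  then have "b \<bullet> b = 0" using nab by simp
  then show ?thesis using True by simp
next
  case a0: False
  define q' where "q' = q - ((p \<bullet> q) / (p \<bullet> p)) *\<^sub>R p"
  define w where "w = b - ((a \<bullet> b) / (a \<bullet> a)) *\<^sub>R a"
  have pp: "p \<bullet> p \<noteq> 0" using p0 by simp
  have aa: "a \<bullet> a \<noteq> 0" using a0 by simp
  have pq': "p \<bullet> q' = 0" unfolding q'_def using pp by (simp add: inner_diff_right)
  have aq': "a \<bullet> q' = 0" unfolding q'_def using o by (simp add: inner_diff_right inner_commute)
  have wp: "w \<bullet> p = 0" unfolding w_def using o by (simp add: inner_diff_left)
  have wq': "w \<bullet> q' = 0" unfolding w_def q'_def using o by (simp add: inner_diff_left inner_diff_right inner_commute)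
  have wa: "w \<bullet> a = 0" unfolding w_def using aa by (simp add: inner_diff_left inner_diff_right inner_commute)
  show ?thesis
  proof (cases "w = 0")
    case True
    define t where "t = (a \<bullet> b) / (a \<bullet> a)"
    have b: "b = t *\<^sub>R a" using True unfolding w_def t_def by simp
    have "t * t * (a \<bullet> a) = a \<bullet> a" using nab b by simp
    then have "t * t = 1" using aa by simp
    then have "t = 1 \<or> t = -1" by algebra
    then show ?thesis using b by auto
  next
    case w0: False
    let ?B = "{p, q', a, w}"
    have q'0: "q' \<noteq> 0" using q0 q'_def by simp
    have po: "pairwise orthogonal ?B"
      using pq' aq' wp wq' wa o(1)
      by (auto simp: pairwise_def orthogonal_def inner_commute)
    have ind: "independent ?B"
      using pairwise_orthogonal_independent[OF po] p0 q'0 a0 w0 by auto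
    have sub: "?B \<subseteq> span S"
      using inS unfolding q'_def w_def by (auto intro: span_diff span_scale)
    have "card ?B \<le> dim (span S)" by (rule independent_card_le_dim[OF sub ind])
    moreover have "card ?B = 4"
    proof -
      have d: "\<And>x y. x \<in> ?B \<Longrightarrow> y \<in> ?B \<Longrightarrow> x \<noteq> y \<Longrightarrow> x \<bullet> y = 0"
        using po by (auto simp: pairwise_def orthogonal_def)
      have "p \<noteq> q'" "p \<noteq> a" "p \<noteq> w" "q' \<noteq> a" "q' \<noteq> w" "a \<noteq> w"
        using pq' o(1) wp aq' wq' wa p0 q'0 a0 w0 by (auto simp: inner_commute)
      then show ?thesis by simp
    qed
    ultimately show ?thesis using dS by simp
  qed
qed

theorem lemma4p1:
  fixes R :: "'n::finite \<Rightarrow> 'n \<Rightarrow> nat" and d :: nat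
    and E :: "real^'n^'n" and \<theta> :: real
    and u1 u2 v1 v2 v3 v4 x :: 'n
  assumes scheme: "sym_assoc_scheme R d"
    and d1: "1 \<le> d"
    and pm: "partially_metric R d"
    and conn: "scheme_graph_connected R"
    and val: "\<forall>y. card {z. adj R y z} = 3"
    and a1: "\<forall>y w. adj R y w \<longrightarrow> card {z. adj R y z \<and> adj R z w} = 0"
    and E_min: "minimal_idempotent R E"
    and E_mult: "rank E = 3"
    and E_eig: "rel_matrix R 1 ** E = \<theta> *\<^sub>R E"
    and u12: "adj R u1 u2"
    and v12: "adj R u1 v1" "adj R u1 v2" "v1 \<noteq> v2" "v1 \<noteq> u2" "v2 \<noteq> u2"
    and v34: "adj R u2 v3" "adj R u2 v4" "v3 \<noteq> v4" "v3 \<noteq> u1" "v4 \<noteq> u1"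
  shows "{cosine E x v3, cosine E x v4} =
    {(\<theta> * cosine E x u2 - cosine E x u1 + (cosine E x v1 - cosine E x v2)) / 2,
     (\<theta> * cosine E x u2 - cosine E x u1 - (cosine E x v1 - cosine E x v2)) / 2}"
proof -
  have Rsym: "\<And>y z. R y z = R z y" using scheme by (simp add: sym_assoc_scheme_def)
  have R0: "\<And>y. R y y = 0" using scheme by (simp add: sym_assoc_scheme_def)
  have adjsym: "\<And>y z. adj R y z = adj R z y" using Rsym by (simp add: adj_def)
  have nocommon: "\<And>y w z. adj R y w \<Longrightarrow> adj R y z \<Longrightarrow> adj R z w \<Longrightarrow> False"
  proof -
    fix y w z assume h: "adj R y w" "adj R y z" "adj R z w"
    have "card {z. adj R y z \<and> adj R z w} = 0" using a1 h(1) by blast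
    then have "{z. adj R y z \<and> adj R z w} = {}" by simp
    then show False using h by blast
  qed
  obtain c where c: "\<And>y z. E $ y $ z = c (R y z)"
    using E_min unfolding minimal_idempotent_def bose_mesner_def by blast
  have Esym: "\<And>y z. E $ y $ z = E $ z $ y" using c Rsym by simp
  have EE: "E ** E = E" using E_min by (simp add: minimal_idempotent_def)
  have E0: "E \<noteq> 0" using E_min by (simp add: minimal_idempotent_def)
  define e where "e y = E $ y" for y
  have inner_e: "\<And>y z. e y \<bullet> e z = E $ y $ z"
  proof -
    fix y z
    have "E $ y $ z = (E ** E) $ y $ z" using EE by simp
    also have "\<dots> = (\<Sum>k\<in>UNIV. E $ y $ k * E $ k $ z)" by (simp add: matrix_matrix_mult_def)
    also have "\<dots> = e y \<bullet> e z" by (simp add: e_def inner_vec_def Esym[of _ z])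
    finally show "e y \<bullet> e z = E $ y $ z" by simp
  qed
  have diag: "\<And>y. E $ y $ y = c 0" using c R0 by simp
  have c0pos: "c 0 > 0"
  proof -
    have ge: "c 0 \<ge> 0" using inner_e[of u1 u1] diag[of u1] by (metis inner_ge_zero)
    have "c 0 \<noteq> 0"
    proof
      assume z: "c 0 = 0"
      have "\<And>y. e y = 0" using inner_e diag z by (metis inner_eq_zero_iff)
      then have "E = 0" unfolding e_def by (simp add: vec_eq_iff)
      then show False using E0 by simp
    qed
    then show ?thesis using ge by simp
  qed
  have nbsum: "\<And>y. (\<Sum>z\<in>{z. adj R y z}. e z) = \<theta> *\<^sub>R e y"
  proof -
    fix y
    show "(\<Sum>z\<in>{z. adj R y z}. e z) = \<theta> *\<^sub>R e y"
    proof (rule vec_eq_iff[THEN iffD2, rule_format])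
      fix w
      have "(rel_matrix R 1 ** E) $ y $ w = (\<theta> *\<^sub>R E) $ y $ w" using E_eig by simp
      moreover have "(rel_matrix R 1 ** E) $ y $ w = (\<Sum>k\<in>UNIV. (if R y k = 1 then 1 else 0) * E $ k $ w)"
        by (simp add: matrix_matrix_mult_def rel_matrix_def)
      moreover have "(\<Sum>k\<in>UNIV. (if R y k = 1 then 1 else 0) * E $ k $ w) = (\<Sum>k\<in>{z. adj R y z}. E $ k $ w)"
      proof -
        have "(\<Sum>k\<in>UNIV. (if R y k = 1 then 1 else 0) * E $ k $ w) = (\<Sum>k\<in>UNIV. if R y k = 1 then E $ k $ w else 0)"
          by (rule sum.cong) auto
        also have "\<dots> = (\<Sum>k\<in>{k\<in>UNIV. R y k = 1}. E $ k $ w)" by (rule sum.inter_filter[symmetric]) simp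
        finally show ?thesis by (simp add: adj_def)
      qed
      ultimately show "(\<Sum>z\<in>{z. adj R y z}. e z) $ w = (\<theta> *\<^sub>R e y) $ w"
        by (simp add: e_def sum_component)
    qed
  qed
  have N2: "{z. adj R u2 z} = {u1, v3, v4}"
  proof -
    have "{u1, v3, v4} \<subseteq> {z. adj R u2 z}" using u12 v34 adjsym by auto
    moreover have "card {u1, v3, v4} = 3" using v34 by auto
    ultimately show ?thesis using val by (metis card_subset_eq finite)
  qed
  have sum2: "e u1 + e v3 + e v4 = \<theta> *\<^sub>R e u2"
    using nbsum[of u2] v34 unfolding N2 by (simp add: add.assoc)
  obtain h where h: "\<And>y z. R y z = h \<longleftrightarrow> dist2 R y z"
    using pm unfolding partially_metric_def by blast
  have "dist2 R v1 u2" unfolding dist2_def using v12 u12 nocommon adjsym by metis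
  then have Rv1u2: "R v1 u2 = h" using h by simp
  have "dist2 R v2 u2" unfolding dist2_def using v12 u12 nocommon adjsym by metis
  then have Rv2u2: "R v2 u2 = h" using h by simp
  have "dist2 R v3 u1" unfolding dist2_def using v34 u12 nocommon adjsym by metis
  then have Rv3u1: "R v3 u1 = h" using h by simp
  have "dist2 R v4 u1" unfolding dist2_def using v34 u12 nocommon adjsym by metis
  then have Rv4u1: "R v4 u1 = h" using h by simp
  have "dist2 R v1 v2" unfolding dist2_def using v12 nocommon adjsym by metis
  then have Rv1v2: "R v1 v2 = h" using h by simp
  have "dist2 R v3 v4" unfolding dist2_def using v34 nocommon adjsym by metis
  then have Rv3v4: "R v3 v4 = h" using h by simp
  have A: "\<And>y z. adj R y z \<Longrightarrow> R y z = 1" by (simp add: adj_def)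
  define a where "a = e v1 - e v2"
  define b where "b = e v3 - e v4"
  have Rs: "R v1 u1 = 1" "R v2 u1 = 1" "R v3 u2 = 1" "R v4 u2 = 1"
    using v12 v34 adjsym A by auto
  have oa1: "a \<bullet> e u1 = 0" "a \<bullet> e u2 = 0" "b \<bullet> e u1 = 0" "b \<bullet> e u2 = 0"
    unfolding a_def b_def
    by (simp_all add: inner_diff_left inner_e c Rs Rv1u2 Rv2u2 Rv3u1 Rv4u1)
  have nab: "a \<bullet> a = b \<bullet> b"
    unfolding a_def b_def
    by (simp add: inner_diff_left inner_diff_right inner_e c R0 Rsym[of v2 v1] Rsym[of v4 v3] Rv1v2 Rv3v4)
  have dimS: "dim (range e) = 3"
  proof -
    have "rows E = range e" by (auto simp: rows_def row_def e_def)
    then show ?thesis using E_mult by (simp add: row_rank_def)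
  qed
  have ine: "\<And>y. e y \<in> span (range e)" by (simp add: span_base)
  have pe: "e u1 \<noteq> 0" using inner_e[of u1 u1] diag c0pos by auto
  have nondeg: "e u2 - ((e u1 \<bullet> e u2) / (e u1 \<bullet> e u1)) *\<^sub>R e u1 \<noteq> 0"
  proof
    define t where "t = c 1 / c 0"
    assume "e u2 - ((e u1 \<bullet> e u2) / (e u1 \<bullet> e u1)) *\<^sub>R e u1 = 0"
    then have eu2: "e u2 = t *\<^sub>R e u1" using inner_e diag c A[OF u12] unfolding t_def by simp
    have "c 0 = t * t * c 0" using inner_e[of u2 u2] diag[of u2] diag[of u1] inner_e[of u1 u1]
      unfolding eu2 by simp
    then have tt: "t * t = 1" using c0pos by simp
    have stp: "e z = t *\<^sub>R e y" if "adj R y z" for y z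
    proof -
      have "(e z - t *\<^sub>R e y) \<bullet> (e z - t *\<^sub>R e y) = c 0 - 2 * t * c 1 + t * t * c 0"
        using that by (simp add: inner_diff_left inner_diff_right inner_e c R0 A Rsym[of z y] algebra_simps)
      also have "\<dots> = 0" using tt c0pos unfolding t_def by (simp add: field_simps)
      finally show ?thesis by simp
    qed
    have allin: "e y \<in> span {e u1}" for y
    proof -
      have "(u1, y) \<in> {(a, b). adj R a b}\<^sup>*" using conn by (simp add: scheme_graph_connected_def)
      then show ?thesis
      proof (induction rule: rtrancl_induct)
        case base then show ?case by (simp add: span_base)
        next
        case (step y z) then show ?case using stp[of y z] by (simp add: span_mul)
      qed
    qed
    have "range e \<subseteq> span {e u1}" using allin by auto
    then have "dim (range e) \<le> card {e u1}" by (rule dim_le_card) simp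
    then show False using dimS by simp
  qed
  have bpm: "b = a \<or> b = - a"
    by (rule key_orth[OF dimS ine ine _ _ oa1(1,2,3,4) nab pe nondeg])
       (auto simp: a_def b_def intro: span_diff ine)
  have comp: "\<And>y. e y $ x = E $ x $ y" by (simp add: e_def Esym)
  have s: "E $ x $ u1 + E $ x $ v3 + E $ x $ v4 = \<theta> * E $ x $ u2"
    using arg_cong[OF sum2, of "\<lambda>v. v $ x"] by (simp add: comp)
  have dd: "E $ x $ v3 - E $ x $ v4 = E $ x $ v1 - E $ x $ v2 \<or>
            E $ x $ v3 - E $ x $ v4 = -(E $ x $ v1 - E $ x $ v2)"
  proof -
    have "b $ x = a $ x \<or> b $ x = - (a $ x)" using bpm by auto
    then show ?thesis unfolding a_def b_def by (simp add: comp)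
  qed
  have Exx: "E $ x $ x = c 0" by (rule diag)
  define k where "k = c 0"
  have k0: "k \<noteq> 0" using c0pos k_def by simp
  have s': "E $ x $ v3 / k + E $ x $ v4 / k = \<theta> * (E $ x $ u2 / k) - E $ x $ u1 / k"
    using s k0 by (simp add: field_simps)
  have dd': "E $ x $ v3 / k - E $ x $ v4 / k = E $ x $ v1 / k - E $ x $ v2 / k \<or>
             E $ x $ v3 / k - E $ x $ v4 / k = -(E $ x $ v1 / k - E $ x $ v2 / k)"
    using dd by (simp only: diff_divide_distrib[symmetric] minus_divide_left) auto
  have gen: "\<And>p q S D::real. p + q = S \<Longrightarrow> (p - q = D \<or> p - q = - D) \<Longrightarrow> {p, q} = {(S + D) / 2, (S - D) / 2}"
    by (auto simp: field_simps)
  show ?thesis unfolding cosine_def Exx k_def[symmetric]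
    using gen[OF s' dd'] by simp
qed

end
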